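(* Let $S$ be an infinite subset of $\mathbb C^2$ and suppose there exist constants $A\ge1$ and $0<\alpha<2$ such that $|S\cap X|\le A(\deg X)^\alpha$ for every algebraic curve $X\subset\mathbb C^2$ not containing $S$. Then $\alpha\ge1$ and $S$ is contained in an irreducible algebraic curve of degree at most $(2A)^{1/(2-\alpha)}$. Moreover, $|S\cap X|\le(2A)^{1/(2-\alpha)}\deg X$ for every algebraic curve $X\subset\mathbb C^2$ not containing $S$. *)

theory Defs
  imports Complex_Main "HOL-Computational_Algebra.Polynomial_Factorial"
begin

text \<open>Bivariate complex polynomials are represented as C[x][y] = complex poly poly:
  P = sum_j (coeff P j)(x) * y^j.\<close>

definition eval2 :: "complex poly poly \<Rightarrow> complex \<times> complex \<Rightarrow> complex" where
  "eval2 P z = poly (map_poly (\<lambda>c. poly c (fst z)) P) (snd z)"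

definition total_degree :: "complex poly poly \<Rightarrow> nat" where
  "total_degree P = (if P = 0 then 0
     else Max {degree (coeff P j) + j | j. coeff P j \<noteq> 0})"

definition zero_set :: "complex poly poly \<Rightarrow> (complex \<times> complex) set" where
  "zero_set P = {z. eval2 P z = 0}"

definition algebraic_curve :: "(complex \<times> complex) set \<Rightarrow> bool" where
  "algebraic_curve X \<longleftrightarrow> (\<exists>P. total_degree P \<ge> 1 \<and> X = zero_set P)"

definition curve_degree :: "(complex \<times> complex) set \<Rightarrow> nat" where
  "curve_degree X = (LEAST d. \<exists>P. total_degree P = d \<and> total_degree P \<ge> 1 \<and> X = zero_set P)"

definition irreducible_curve :: "(complex \<times> complex) set \<Rightarrow> bool" where
  "irreducible_curve X \<longleftrightarrow> (\<exists>P. irreducible P \<and> total_degree P \<ge> 1 \<and> X = zero_set P)"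

end

theory Submission
  imports Defs "HOL-Computational_Algebra.Field_as_Ring"
begin


lemma tdeg_le_iff:
  "total_degree P \<le> n \<longleftrightarrow> (\<forall>j. coeff P j \<noteq> 0 \<longrightarrow> degree (coeff P j) + j \<le> n)"
proof (cases "P = 0")
  case True then show ?thesis by (simp add: total_degree_def)
next
  case False
  let ?M = "{degree (coeff P j) + j | j. coeff P j \<noteq> 0}"
  have fin: "finite ?M"
  proof -
    have "?M \<subseteq> (\<lambda>j. degree (coeff P j) + j) ` {..degree P}"
      using le_degree by fastforce
    then show ?thesis by (rule finite_subset) simp
  qed
  have ne: "?M \<noteq> {}" using False by (auto intro!: exI[of _ "degree P"])
  show ?thesis using False fin ne by (auto simp: total_degree_def Max_le_iff)
qed

lemma tdeg_ge: "coeff P j \<noteq> 0 \<Longrightarrow> degree (coeff P j) + j \<le> total_degree P"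
  using tdeg_le_iff[of P "total_degree P"] by auto

lemma tdeg_attained:
  assumes "P \<noteq> 0"
  shows "\<exists>j. coeff P j \<noteq> 0 \<and> degree (coeff P j) + j = total_degree P"
proof -
  let ?M = "{degree (coeff P j) + j | j. coeff P j \<noteq> 0}"
  have fin: "finite ?M"
  proof -
    have "?M \<subseteq> (\<lambda>j. degree (coeff P j) + j) ` {..degree P}"
      using le_degree by fastforce
    then show ?thesis by (rule finite_subset) simp
  qed
  have ne: "?M \<noteq> {}" using assms by (auto intro!: exI[of _ "degree P"])
  have "Max ?M \<in> ?M" using fin ne by (rule Max_in)
  then show ?thesis using assms by (auto simp: total_degree_def)
qed

lemma eval2_alt: "eval2 P (a, b) = poly (poly P [:b:]) a"
  unfolding eval2_def
  by (induction P rule: pCons_induct) (auto simp: map_poly_pCons)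

lemma eval2_add[simp]: "eval2 (P + Q) z = eval2 P z + eval2 Q z"
  by (cases z) (simp add: eval2_alt)
lemma eval2_mult[simp]: "eval2 (P * Q) z = eval2 P z * eval2 Q z"
  by (cases z) (simp add: eval2_alt)
lemma eval2_smult[simp]: "eval2 (smult [:c:] P) z = c * eval2 P z"
  by (cases z) (simp add: eval2_alt)
lemma eval2_prod: "eval2 (prod f F) z = (\<Prod>a\<in>F. eval2 (f a) z)"
  by (cases z) (simp add: eval2_alt poly_prod)

lemma x_monom: "[:0, c:] = monom c 1"
  by (simp add: monom_Suc monom_0)

lemma coeff_monom_mult_gen:
  "coeff (monom a i * q) t = (if i \<le> t then a * coeff q (t - i) else 0)"
proof (cases "i \<le> t")
  case True
  then obtain k where "t = i + k" using le_Suc_ex by blast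
  then show ?thesis by (simp add: coeff_monom_mult)
next
  case False
  then show ?thesis by (simp add: coeff_mult coeff_monom sum.neutral)
qed

lemma deg_evl: "degree (poly P [:0, c:]) \<le> total_degree P"
proof -
  have "poly P [:0, c:] = (\<Sum>i\<le>degree P. coeff P i * [:0, c:] ^ i)"
    by (simp add: poly_altdef)
  also have "degree \<dots> \<le> total_degree P"
  proof (rule degree_sum_le)
    fix i assume "i \<in> {..degree P}"
    show "degree (coeff P i * [:0, c:] ^ i) \<le> total_degree P"
    proof (cases "coeff P i = 0")
      case True then show ?thesis by simp
    next
      case False
      have "degree (coeff P i * [:0, c:] ^ i) \<le> degree (coeff P i) + degree ([:0, c:] ^ i)"
        by (rule degree_mult_le)
      also have "degree ([:0, c:] ^ i) \<le> i"
        by (simp add: x_monom monom_power degree_monom_le)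
      finally show ?thesis using tdeg_ge[OF False] by linarith
    qed
  qed simp
  finally show ?thesis .
qed

definition Hpol :: "complex poly poly \<Rightarrow> nat \<Rightarrow> complex poly" where
  "Hpol P t = (\<Sum>i\<le>degree P. monom (if i \<le> t then coeff (coeff P i) (t - i) else 0) i)"

lemma coeff_evl: "coeff (poly P [:0, c:]) t = poly (Hpol P t) c"
proof -
  have "poly P [:0, c:] = (\<Sum>i\<le>degree P. monom (c ^ i) i * coeff P i)"
    by (simp add: poly_altdef x_monom monom_power mult.commute)
  then have "coeff (poly P [:0, c:]) t = (\<Sum>i\<le>degree P. (if i \<le> t then c ^ i * coeff (coeff P i) (t - i) else 0))"
    by (simp add: coeff_sum coeff_monom_mult_gen)
  also have "\<dots> = poly (Hpol P t) c"
    unfolding Hpol_def poly_sum by (intro sum.cong) (auto simp: poly_monom)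
  finally show ?thesis .
qed

lemma Hpol_nz:
  assumes "P \<noteq> 0"
  shows "Hpol P (total_degree P) \<noteq> 0"
proof -
  obtain j where j: "coeff P j \<noteq> 0" "degree (coeff P j) + j = total_degree P"
    using tdeg_attained[OF assms] by blast
  have jd: "j \<le> degree P" using j(1) le_degree by blast
  have tj: "total_degree P - j = degree (coeff P j)" using j(2) by linarith
  have "coeff (Hpol P (total_degree P)) j = (\<Sum>i\<le>degree P. if i = j then lead_coeff (coeff P j) else 0)"
    unfolding Hpol_def coeff_sum using j(2)
    by (intro sum.cong) (auto simp: coeff_monom tj)
  also have "\<dots> = lead_coeff (coeff P j)" using jd by simp
  finally show ?thesis using j(1) by (metis coeff_0 leading_coeff_0_iff)
qed

lemma bad_finite:
  assumes "P \<noteq> 0"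
  shows "finite {c. coeff (poly P [:0, c:]) (total_degree P) = 0}"
  using poly_roots_finite[OF Hpol_nz[OF assms]] by (simp add: coeff_evl)

lemma good_evl:
  assumes "coeff (poly P [:0, c:]) (total_degree P) \<noteq> 0"
  shows "poly P [:0, c:] \<noteq> 0" "degree (poly P [:0, c:]) = total_degree P"
  using assms deg_evl[of P c] le_degree[OF assms] by auto

lemma tdeg_mult:
  assumes "P \<noteq> 0" "Q \<noteq> 0"
  shows "total_degree (P * Q) = total_degree P + total_degree Q"
proof -
  have PQ: "P * Q \<noteq> 0" using assms by simp
  define B1 where "B1 = {c. coeff (poly P [:0, c:]) (total_degree P) = 0}"
  define B2 where "B2 = {c. coeff (poly Q [:0, c:]) (total_degree Q) = 0}"
  define B3 where "B3 = {c. coeff (poly (P*Q) [:0, c:]) (total_degree (P*Q)) = 0}"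
  have "finite (B1 \<union> B2 \<union> B3)"
    using bad_finite[OF assms(1)] bad_finite[OF assms(2)] bad_finite[OF PQ]
    unfolding B1_def B2_def B3_def by blast
  then obtain c where c: "c \<notin> B1 \<union> B2 \<union> B3"
    by (metis ex_new_if_finite infinite_UNIV_char_0)
  have c1: "coeff (poly P [:0, c:]) (total_degree P) \<noteq> 0" using c unfolding B1_def by blast
  have c2: "coeff (poly Q [:0, c:]) (total_degree Q) \<noteq> 0" using c unfolding B2_def by blast
  have c3: "coeff (poly (P*Q) [:0, c:]) (total_degree (P*Q)) \<noteq> 0" using c unfolding B3_def by blast
  note 1 = good_evl[OF c1] and 2 = good_evl[OF c2] and 3 = good_evl[OF c3]
  have "degree (poly (P*Q) [:0, c:]) = degree (poly P [:0, c:] * poly Q [:0, c:])"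
    by (simp only: poly_mult)
  also have "\<dots> = degree (poly P [:0, c:]) + degree (poly Q [:0, c:])"
    using 1(1) 2(1) by (rule degree_mult_eq)
  finally show ?thesis using 1(2) 2(2) 3(2) by simp
qed



lemma const_mult_poly: "[:c:] * q = smult c q"
  by simp

lemma tdeg_add_le:
  assumes "total_degree P \<le> n" "total_degree Q \<le> n"
  shows "total_degree (P + Q) \<le> n"
  unfolding tdeg_le_iff
proof (intro allI impI)
  fix j assume nz: "coeff (P + Q) j \<noteq> 0"
  have a: "coeff P j \<noteq> 0 \<Longrightarrow> degree (coeff P j) + j \<le> n" using assms(1) tdeg_le_iff by blast
  have b: "coeff Q j \<noteq> 0 \<Longrightarrow> degree (coeff Q j) + j \<le> n" using assms(2) tdeg_le_iff by blast
  have "degree (coeff P j + coeff Q j) \<le> max (degree (coeff P j)) (degree (coeff Q j))"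
    by (rule degree_add_le_max)
  then show "degree (coeff (P + Q) j) + j \<le> n"
    using a b nz by (cases "coeff P j = 0"; cases "coeff Q j = 0") auto
qed

lemma tdeg_smult_le: "total_degree (smult [:c:] P) \<le> total_degree P"
  unfolding tdeg_le_iff
proof (intro allI impI)
  fix j assume nz: "coeff (smult [:c:] P) j \<noteq> 0"
  then have "coeff P j \<noteq> 0" by auto
  moreover have "degree (coeff (smult [:c:] P) j) \<le> degree (coeff P j)"
    by (simp add: degree_smult_le)
  ultimately show "degree (coeff (smult [:c:] P) j) + j \<le> total_degree P"
    using tdeg_ge by fastforce
qed

lemma tdeg_0_const:
  assumes "total_degree P = 0"
  shows "P = [:[:coeff (coeff P 0) 0:]:]"
proof -
  have h: "\<And>j. coeff P j \<noteq> 0 \<Longrightarrow> degree (coeff P j) + j \<le> 0"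
    using assms tdeg_le_iff[of P 0] by auto
  have "coeff P j = 0" if "j > 0" for j using h[of j] that by fastforce
  moreover have "degree (coeff P 0) = 0" using h[of 0] by fastforce
  ultimately show ?thesis
    by (auto simp: poly_eq_iff coeff_pCons coeff_eq_0 split: nat.splits)
qed

lemma tdeg_const: "total_degree [:[:c:]:] = 0"
  by (simp add: tdeg_le_iff[of _ 0, simplified] coeff_pCons split: nat.splits)

lemma eval2_const[simp]: "eval2 [:[:c:]:] z = c"
  by (cases z) (simp add: eval2_alt)

lemma unit_tdeg: "is_unit P \<Longrightarrow> total_degree P = 0"
proof -
  assume "is_unit P"
  then obtain Q where "1 = P * Q" by (auto elim: dvdE)
  moreover then have "P \<noteq> 0" "Q \<noteq> 0" by auto
  ultimately have "total_degree 1 = total_degree P + total_degree Q"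
    by (metis tdeg_mult)
  moreover have "total_degree (1::complex poly poly) = 0"
    using tdeg_const[of 1] by (simp add: one_pCons)
  ultimately show ?thesis by simp
qed

lemma tdeg0_unit:
  assumes "total_degree P = 0" "P \<noteq> 0"
  shows "is_unit P"
proof -
  define c where "c = coeff (coeff P 0) 0"
  have P: "P = [:[:c:]:]" using tdeg_0_const[OF assms(1)] c_def by simp
  then have "c \<noteq> 0" using assms(2) by auto
  then have "P * [:[:1/c:]:] = 1" using P by (simp add: one_pCons)
  then show ?thesis by (metis dvdI)
qed

definition Xl :: "complex \<Rightarrow> complex poly poly" where "Xl a = [:[:-a, 1:]:]"
definition Yl :: "complex \<Rightarrow> complex poly poly" where "Yl b = [:[:-b:], 1:]"

lemma eval2_Xl[simp]: "eval2 (Xl a) z = fst z - a"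
  by (cases z) (simp add: eval2_alt Xl_def)
lemma eval2_Yl[simp]: "eval2 (Yl b) z = snd z - b"
  by (cases z) (simp add: eval2_alt Yl_def)
lemma Xl_nz: "Xl a \<noteq> 0" by (simp add: Xl_def)
lemma Yl_nz: "Yl a \<noteq> 0" by (simp add: Yl_def)

lemma tdeg_Xl: "total_degree (Xl a) = 1"
proof -
  have "total_degree (Xl a) \<le> 1"
    unfolding tdeg_le_iff by (auto simp: Xl_def coeff_pCons split: nat.splits)
  moreover have "total_degree (Xl a) \<ge> 1"
    using tdeg_ge[of "Xl a" 0] by (simp add: Xl_def)
  ultimately show ?thesis by simp
qed

lemma tdeg_Yl: "total_degree (Yl a) = 1"
proof -
  have "total_degree (Yl a) \<le> 1"
    unfolding tdeg_le_iff by (auto simp: Yl_def coeff_pCons split: nat.splits)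
  moreover have "total_degree (Yl a) \<ge> 1"
    using tdeg_ge[of "Yl a" 1] by (simp add: Yl_def)
  ultimately show ?thesis by simp
qed

lemma tdeg_prod:
  assumes "finite F" "\<And>a. a \<in> F \<Longrightarrow> f a \<noteq> 0"
  shows "total_degree (prod f F) = (\<Sum>a\<in>F. total_degree (f a)) \<and> prod f F \<noteq> 0"
  using assms
proof (induction F rule: finite_induct)
  case empty
  then show ?case using tdeg_const[of 1] by (simp add: one_pCons)
next
  case (insert x F)
  then show ?case by (simp add: tdeg_mult)
qed



context vector_space begin

lemma indep_Un_span:
  assumes "finite Y" "independent X" "independent Y" "span X \<inter> span Y \<subseteq> {0}"
  shows "independent (X \<union> Y)"
  using assms(1,3,4)
proof (induction Y rule: finite_induct)
  case empty
  then show ?case using assms(2) by simp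
next
  case (insert y Y)
  have iY: "independent Y" using insert.prems(1) independent_mono by blast
  have sY: "span X \<inter> span Y \<subseteq> {0}" using insert.prems(2) span_mono[of Y "insert y Y"] by blast
  have IH: "independent (X \<union> Y)" using insert.IH iY sY by blast
  have yY: "y \<notin> span Y" using insert.prems(1) insert.hyps(2) by (simp add: independent_insert)
  have "y \<notin> span (X \<union> Y)"
  proof
    assume "y \<in> span (X \<union> Y)"
    then obtain x z where xz: "y = x + z" "x \<in> span X" "z \<in> span Y" by (auto simp: span_Un)
    have "x = y - z" using xz by simp
    moreover have "y - z \<in> span (insert y Y)"
      using xz(3) span_mono[of Y "insert y Y"] by (intro span_diff) (auto intro: span_base)
    ultimately have "x \<in> span X \<inter> span (insert y Y)" using xz by simp
    then have "x = 0" using insert.prems(2) by blast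
    then show False using xz yY by simp
  qed
  then have "independent (insert y (X \<union> Y))" using IH by (rule independent_insertI)
  then show ?case by simp
qed

lemma span_disj:
  assumes "independent B" "finite B" "X \<subseteq> B"
  shows "span X \<inter> span (B - X) \<subseteq> {0}"
proof -
  have "\<And>Y. finite Y \<Longrightarrow> Y \<subseteq> B - X \<Longrightarrow> span X \<inter> span Y \<subseteq> {0}"
  proof -
    fix Y :: "'b set" assume "finite Y" "Y \<subseteq> B - X"
    then show "span X \<inter> span Y \<subseteq> {0}"
    proof (induction Y rule: finite_induct)
      case empty then show ?case by simp
    next
      case (insert y Y)
      have IH: "span X \<inter> span Y \<subseteq> {0}" using insert by blast
      show ?case
      proof
        fix v assume v: "v \<in> span X \<inter> span (insert y Y)"
        then obtain k where k: "v - k *s y \<in> span Y" by (auto simp: span_breakdown_eq)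
        show "v \<in> {0}"
        proof (cases "k = 0")
          case True
          then show ?thesis using k v IH by auto
        next
          case False
          have a: "v \<in> span (X \<union> Y)" using v span_mono[of X "X \<union> Y"] by blast
          have b: "v - k *s y \<in> span (X \<union> Y)" using k span_mono[of Y "X \<union> Y"] by blast
          have "k *s y \<in> span (X \<union> Y)" using span_diff[OF a b] by simp
          then have "inverse k *s (k *s y) \<in> span (X \<union> Y)" by (rule span_scale)
          then have "y \<in> span (X \<union> Y)" using False by simp
          moreover have "X \<union> Y \<subseteq> B - {y}" using insert assms(3) by blast
          ultimately have "y \<in> span (B - {y})" using span_mono by blast
          moreover have "y \<in> B" using insert by blast
          ultimately have "dependent B" unfolding dependent_def by blast
          then show ?thesis using assms(1) by blast
        qed
      qed
    qed
  qed
  then show ?thesis using assms(2) by blast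
qed

lemma card_indep_le_dim:
  assumes "independent B" "B \<subseteq> W" "W \<subseteq> span F" "finite F"
  shows "card B \<le> dim W"
proof -
  obtain C where C: "C \<subseteq> W" "independent C" "W \<subseteq> span C" "card C = dim W"
    by (rule basis_exists)
  have "finite C" using independent_span_bound[OF assms(4) C(2)] C(1) assms(3) by blast
  then show ?thesis using independent_span_bound[OF _ assms(1), of C] C assms(2) by auto
qed

lemma dim_mono_fin:
  assumes "W \<subseteq> W'" "W' \<subseteq> span F" "finite F"
  shows "dim W \<le> dim W'"
proof -
  obtain C where C: "C \<subseteq> W" "independent C" "W \<subseteq> span C" "card C = dim W"
    by (rule basis_exists)
  then show ?thesis using card_indep_le_dim[OF C(2) _ assms(2,3)] assms(1) by auto
qed

lemma dim_pos_nz: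
  assumes "dim W > 0"
  shows "\<exists>w\<in>W. w \<noteq> 0"
proof (rule ccontr)
  assume "\<not> ?thesis"
  then have "W \<subseteq> span {}" by auto
  then have "dim W \<le> card ({} :: 'b set)" by (rule dim_le_card) simp
  then show False using assms by simp
qed

lemma dim_hyper:
  assumes W: "subspace W" "W \<subseteq> span F" "finite F"
    and fadd: "\<And>x y. f (x + y) = f x + f y"
    and fscale: "\<And>c x. f (c *s x) = c * f x"
  shows "dim W \<le> dim {w \<in> W. f w = 0} + 1"
    and "(\<exists>w0\<in>W. f w0 \<noteq> 0) \<Longrightarrow> dim W = dim {w \<in> W. f w = 0} + 1"
proof -
  define K where "K = {w \<in> W. f w = 0}"
  have f0: "f 0 = 0" using fscale[of 0 0] by simp
  have sK: "subspace K"
    unfolding subspace_def K_def using W(1) f0 fadd fscale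
    by (auto simp: subspace_def)
  obtain B where B: "B \<subseteq> K" "independent B" "K \<subseteq> span B" "card B = dim K"
    by (rule basis_exists)
  have KW: "K \<subseteq> W" by (auto simp: K_def)
  have finB: "finite B" using independent_span_bound[OF W(3) B(2)] B(1) KW W(2) by blast
  have main: "dim W = dim K + 1" if ex: "\<exists>w0\<in>W. f w0 \<noteq> 0"
  proof -
    obtain w0 where w0: "w0 \<in> W" "f w0 \<noteq> 0" using ex by blast
    have spB: "span B \<subseteq> K" using span_minimal[OF B(1) sK] .
    have "w0 \<notin> span B" using spB w0 by (auto simp: K_def)
    then have ind: "independent (insert w0 B)" using B(2) by (rule independent_insertI)
    have sub: "insert w0 B \<subseteq> W" using w0 B(1) KW by blast
    have sp: "W \<subseteq> span (insert w0 B)"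
    proof
      fix w assume w: "w \<in> W"
      define k where "k = f w / f w0"
      have "f w = f (w - k *s w0) + k * f w0" using fadd[of "w - k *s w0" "k *s w0"] fscale by simp
      then have "f (w - k *s w0) = 0" using w0(2) by (simp add: k_def)
      moreover have "w - k *s w0 \<in> W" using W(1) w w0(1) by (intro subspace_diff subspace_scale) auto
      ultimately have "w - k *s w0 \<in> span B" using B(3) by (auto simp: K_def)
      then show "w \<in> span (insert w0 B)" by (auto simp: span_breakdown_eq)
    qed
    have "card (insert w0 B) = dim W" using basis_card_eq_dim[OF sub sp ind] .
    moreover have "w0 \<notin> B" using \<open>w0 \<notin> span B\<close> span_base by blast
    ultimately show ?thesis using finB B(4) by simp
  qed
  show "(\<exists>w0\<in>W. f w0 \<noteq> 0) \<Longrightarrow> dim W = dim {w \<in> W. f w = 0} + 1"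
    using main by (simp add: K_def)
  show "dim W \<le> dim {w \<in> W. f w = 0} + 1"
  proof (cases "\<exists>w0\<in>W. f w0 \<noteq> 0")
    case True then show ?thesis using main by (simp add: K_def)
  next
    case False
    then have "{w \<in> W. f w = 0} = W" by auto
    then show ?thesis by simp
  qed
qed

end



definition scl :: "complex \<Rightarrow> complex poly poly \<Rightarrow> complex poly poly" where
  "scl c p = smult [:c:] p"

interpretation pv: vector_space scl
proof unfold_locales
  fix a b :: complex and x y :: "complex poly poly"
  show "scl a (x + y) = scl a x + scl a y" by (simp add: scl_def smult_add_right)
  show "scl (a + b) x = scl a x + scl b x" unfolding scl_def by (subst smult_add_left[symmetric]) simp
  show "scl a (scl b x) = scl (a * b) x" by (simp add: scl_def mult.commute)
  show "scl 1 x = x" unfolding scl_def by (metis one_pCons smult_1_left)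
qed

lemma eval2_scl[simp]: "eval2 (scl c P) z = c * eval2 P z"
  by (simp add: scl_def)

lemma scl_mult: "P * scl c Q = scl c (P * Q)"
  by (simp add: scl_def)

definition monp :: "nat \<times> nat \<Rightarrow> complex poly poly" where
  "monp x = monom (monom 1 (fst x)) (snd x)"

definition Iset :: "nat \<Rightarrow> (nat \<times> nat) set" where
  "Iset n = {x. fst x + snd x \<le> n}"

definition Mon :: "nat \<Rightarrow> complex poly poly set" where
  "Mon n = monp ` Iset n"

definition Vs :: "nat \<Rightarrow> complex poly poly set" where
  "Vs n = {p. total_degree p \<le> n}"

lemma finite_Iset: "finite (Iset n)"
proof -
  have "Iset n \<subseteq> {..n} \<times> {..n}" by (auto simp: Iset_def)
  then show ?thesis by (rule finite_subset) simp
qed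

lemma coeff_scl_monp: "coeff (coeff (scl c (monp x)) j) i = (if x = (i, j) then c else 0)"
  by (cases x) (auto simp: scl_def monp_def coeff_monom)

lemma coeff_sum_monp:
  assumes "finite I"
  shows "coeff (coeff (\<Sum>x\<in>I. scl (a x) (monp x)) j) i = (if (i, j) \<in> I then a (i, j) else 0)"
proof -
  have "coeff (coeff (\<Sum>x\<in>I. scl (a x) (monp x)) j) i = (\<Sum>x\<in>I. if x = (i, j) then a x else 0)"
    by (simp add: coeff_sum coeff_scl_monp)
  also have "\<dots> = (if (i, j) \<in> I then a (i, j) else 0)"
    using assms by (simp add: sum.delta')
  finally show ?thesis .
qed

lemma coeff_monp: "coeff (coeff (monp x) j) i = (if x = (i, j) then 1 else 0)"
  by (cases x) (auto simp: monp_def coeff_monom)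

lemma inj_monp: "inj monp"
proof
  fix x y assume "monp x = monp y"
  then have "coeff (coeff (monp x) (snd x)) (fst x) = coeff (coeff (monp y) (snd x)) (fst x)"
    by simp
  then show "x = y" unfolding coeff_monp by (auto split: if_splits)
qed

lemma subspace_Vs: "pv.subspace (Vs n)"
  unfolding pv.subspace_def Vs_def
  using tdeg_add_le tdeg_smult_le by (auto simp: scl_def total_degree_def intro: order.trans)

lemma Mon_sub_Vs: "Mon n \<subseteq> Vs n"
proof
  fix p assume "p \<in> Mon n"
  then obtain x where x: "x \<in> Iset n" "p = monp x" by (auto simp: Mon_def)
  show "p \<in> Vs n" unfolding Vs_def
    using x by (auto simp: tdeg_le_iff monp_def coeff_monom Iset_def degree_monom_eq split: if_splits)
qed

lemma Vs_expand:
  assumes "p \<in> Vs n"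
  shows "p = (\<Sum>x\<in>Iset n. scl (coeff (coeff p (snd x)) (fst x)) (monp x))"
proof -
  have eq: "coeff (coeff p j) i = coeff (coeff (\<Sum>x\<in>Iset n. scl (coeff (coeff p (snd x)) (fst x)) (monp x)) j) i"
    for i j
  proof (cases "(i, j) \<in> Iset n")
    case True
    then show ?thesis by (simp add: coeff_sum_monp finite_Iset)
  next
    case False
    have "coeff (coeff p j) i = 0"
    proof (cases "coeff p j = 0")
      case False
      have "degree (coeff p j) + j \<le> n" using assms False by (auto simp: Vs_def tdeg_le_iff)
      then show ?thesis using \<open>(i, j) \<notin> Iset n\<close> by (intro coeff_eq_0) (auto simp: Iset_def)
    qed simp
    then show ?thesis using False by (simp add: coeff_sum_monp finite_Iset)
  qed
  show ?thesis by (intro poly_eqI) (rule eq)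
qed

lemma span_Mon: "pv.span (Mon n) = Vs n"
proof (rule pv.span_subspace[OF Mon_sub_Vs _ subspace_Vs])
  show "Vs n \<subseteq> pv.span (Mon n)"
  proof
    fix p assume p: "p \<in> Vs n"
    have "(\<Sum>x\<in>Iset n. scl (coeff (coeff p (snd x)) (fst x)) (monp x)) \<in> pv.span (Mon n)"
      by (intro pv.span_sum pv.span_scale pv.span_base) (auto simp: Mon_def)
    then show "p \<in> pv.span (Mon n)" using Vs_expand[OF p] by simp
  qed
qed

lemma indep_Mon: "pv.independent (Mon n)"
proof (rule pv.independent_if_scalars_zero)
  show "finite (Mon n)" by (simp add: Mon_def finite_Iset)
next
  fix f x assume sum: "(\<Sum>x\<in>Mon n. scl (f x) x) = 0" and x: "x \<in> Mon n"
  have "(\<Sum>x\<in>Mon n. scl (f x) x) = (\<Sum>y\<in>Iset n. scl (f (monp y)) (monp y))"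
    unfolding Mon_def by (rule sum.reindex_cong[OF inj_on_subset[OF inj_monp]]; auto)
  then have s0: "(\<Sum>y\<in>Iset n. scl (f (monp y)) (monp y)) = 0" using sum by simp
  obtain y where y: "y \<in> Iset n" "x = monp y" using x by (auto simp: Mon_def)
  have "coeff (coeff (\<Sum>y\<in>Iset n. scl (f (monp y)) (monp y)) (snd y)) (fst y) = f (monp y)"
    using y(1) by (simp add: coeff_sum_monp[OF finite_Iset, of "\<lambda>y. f (monp y)"])
  then show "f x = 0" using s0 y by simp
qed

lemma card_Mon: "card (Mon n) = card (Iset n)"
  unfolding Mon_def by (rule card_image[OF inj_on_subset[OF inj_monp]]) simp

lemma card_Iset: "2 * card (Iset n) = (n + 1) * (n + 2)"
proof (induction n)
  case 0
  have "Iset 0 = {(0, 0)}" by (auto simp: Iset_def)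
  then show ?case by simp
next
  case (Suc n)
  have eq: "Iset (Suc n) = Iset n \<union> (\<lambda>i. (i, Suc n - i)) ` {..Suc n}"
  proof -
    have "x \<in> Iset (Suc n) \<longleftrightarrow> x \<in> Iset n \<or> x \<in> (\<lambda>i. (i, Suc n - i)) ` {..Suc n}" for x
    proof (cases x)
      case (Pair a b)
      show ?thesis
      proof
        assume "x \<in> Iset (Suc n)"
        then have "a + b \<le> n \<or> a + b = Suc n" using Pair by (auto simp: Iset_def)
        then show "x \<in> Iset n \<or> x \<in> (\<lambda>i. (i, Suc n - i)) ` {..Suc n}"
        proof
          assume "a + b = Suc n"
          then have "x = (\<lambda>i. (i, Suc n - i)) a" "a \<in> {..Suc n}" using Pair by auto
          then show ?thesis by blast
        qed (simp add: Pair Iset_def)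
      qed (auto simp: Iset_def Pair)
    qed
    then show ?thesis by blast
  qed
  have disj: "Iset n \<inter> (\<lambda>i. (i, Suc n - i)) ` {..Suc n} = {}" by (auto simp: Iset_def)
  have inj: "inj_on (\<lambda>i. (i, Suc n - i)) {..Suc n}" by (auto simp: inj_on_def)
  have "card (Iset (Suc n)) = card (Iset n) + (Suc n + 1)"
    unfolding eq using disj inj finite_Iset by (simp add: card_Un_disjoint card_image)
  then have "2 * card (Iset (Suc n)) = 2 * card (Iset n) + 2 * (n + 2)" by simp
  also have "\<dots> = (n + 1) * (n + 2) + 2 * (n + 2)" using Suc by simp
  also have "\<dots> = (Suc n + 1) * (Suc n + 2)" by (simp add: algebra_simps)
  finally show ?case .
qed

lemma dim_Vs: "pv.dim (Vs n) = card (Iset n)"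
  using pv.dim_span_eq_card_independent[OF indep_Mon, of n] span_Mon card_Mon by simp

lemma Vs_sub_span: "Vs n \<subseteq> pv.span (Mon n)" using span_Mon by simp
lemma finite_Mon: "finite (Mon n)" by (simp add: Mon_def finite_Iset)



lemma tdeg_zero[simp]: "total_degree 0 = 0" by (simp add: total_degree_def)

lemma eval2_zero[simp]: "eval2 0 z = 0" by (cases z) (simp add: eval2_alt)

lemma tdeg_mult_le: "total_degree (P * Q) \<le> total_degree P + total_degree Q"
proof (cases "P = 0 \<or> Q = 0")
  case True then show ?thesis by auto
next
  case False then show ?thesis using tdeg_mult by simp
qed

lemma mulP_hom: "module_hom scl scl (\<lambda>a. P * a)"
  unfolding module_hom_iff module_iff_vector_space
  using pv.vector_space_axioms by (simp add: distrib_left scl_mult)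

lemma mulP_indep:
  assumes "P \<noteq> 0" "pv.independent S"
  shows "pv.independent ((\<lambda>a. P * a) ` S)"
  using module_hom.independent_injective_image[OF mulP_hom assms(2)] assms(1)
  by (auto simp: inj_on_def)

lemma span_mulP: "pv.span ((\<lambda>a. P * a) ` S) = (\<lambda>a. P * a) ` pv.span S"
  using module_hom.span_image[OF mulP_hom] by simp

definition Kset :: "nat \<Rightarrow> (complex \<times> complex) set \<Rightarrow> complex poly poly set" where
  "Kset n T = {p \<in> Vs n. \<forall>t\<in>T. eval2 p t = 0}"

lemma subspace_Kset: "pv.subspace (Kset n T)"
  using subspace_Vs[of n] unfolding Kset_def pv.subspace_def by auto

lemma Kset_sub: "Kset n T \<subseteq> pv.span (Mon n)"
  using span_Mon by (auto simp: Kset_def)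

lemma Kset_insert: "Kset n (insert t T) = {w \<in> Kset n T. eval2 w t = 0}"
  by (auto simp: Kset_def)

lemma Kset_empty: "Kset n {} = Vs n" by (auto simp: Kset_def)

lemma interp_dim:
  assumes "finite T"
  shows "card (Iset n) \<le> pv.dim (Kset n T) + card T"
  using assms
proof (induction T rule: finite_induct)
  case empty
  then show ?case by (simp add: Kset_empty dim_Vs)
next
  case (insert t T)
  have "pv.dim (Kset n T) \<le> pv.dim {w \<in> Kset n T. eval2 w t = 0} + 1"
    by (rule pv.dim_hyper(1)[OF subspace_Kset Kset_sub finite_Mon]) auto
  then show ?case using insert by (simp add: Kset_insert)
qed

lemma interp:
  assumes "finite T" "card T < card (Iset n)"
  shows "\<exists>p. p \<noteq> 0 \<and> total_degree p \<le> n \<and> (\<forall>t\<in>T. eval2 p t = 0)"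
proof -
  have "pv.dim (Kset n T) > 0" using interp_dim[OF assms(1), of n] assms(2) by linarith
  then obtain p where "p \<in> Kset n T" "p \<noteq> 0" using pv.dim_pos_nz by blast
  then show ?thesis by (auto simp: Kset_def Vs_def)
qed

definition lin :: "complex \<times> complex \<Rightarrow> complex \<times> complex \<Rightarrow> complex poly poly" where
  "lin t s = (if fst s \<noteq> fst t then Xl (fst s) else Yl (snd s))"

lemma lin_props:
  "eval2 (lin t s) s = 0" "s \<noteq> t \<Longrightarrow> eval2 (lin t s) t \<noteq> 0"
  "total_degree (lin t s) = 1" "lin t s \<noteq> 0"
  by (auto simp: lin_def tdeg_Xl tdeg_Yl Xl_nz Yl_nz prod_eq_iff)

lemma lagrange:
  assumes "finite T" "t \<notin> T"
  shows "\<exists>L. total_degree L = card T \<and> (\<forall>s\<in>T. eval2 L s = 0) \<and> eval2 L t \<noteq> 0"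
proof -
  define L where "L = (\<Prod>s\<in>T. lin t s)"
  have "total_degree L = card T"
    using tdeg_prod[OF assms(1), of "lin t"] by (simp add: L_def lin_props)
  moreover have "\<forall>s\<in>T. eval2 L s = 0"
  proof
    fix s assume s: "s \<in> T"
    have "eval2 L s = (\<Prod>s'\<in>T. eval2 (lin t s') s)" by (simp add: L_def eval2_prod)
    also have "\<dots> = 0" using s assms(1) lin_props(1)[of t s] by (simp add: prod_zero_iff) blast
    finally show "eval2 L s = 0" .
  qed
  moreover have "eval2 L t \<noteq> 0"
  proof -
    have "\<forall>s\<in>T. eval2 (lin t s) t \<noteq> 0" using assms(2) lin_props(2) by metis
    then show ?thesis using assms(1) by (simp add: L_def eval2_prod prod_zero_iff)
  qed
  ultimately show ?thesis by blast
qed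

lemma bezout_dim:
  assumes "finite T"
  shows "card T \<le> n \<Longrightarrow> pv.dim (Kset n T) + card T = card (Iset n)"
  using assms
proof (induction T rule: finite_induct)
  case empty
  then show ?case by (simp add: Kset_empty dim_Vs)
next
  case (insert t T)
  have cT: "card T < n" using insert by simp
  obtain L where L: "total_degree L = card T" "\<forall>s\<in>T. eval2 L s = 0" "eval2 L t \<noteq> 0"
    using lagrange[OF insert.hyps] by blast
  have "L \<in> Kset n T" using L cT by (auto simp: Kset_def Vs_def)
  then have "pv.dim (Kset n T) = pv.dim {w \<in> Kset n T. eval2 w t = 0} + 1"
    using L(3) by (intro pv.dim_hyper(2)[OF subspace_Kset Kset_sub finite_Mon]) auto
  then show ?case using insert cT by (simp add: Kset_insert)
qed



lemma Vs_mult: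
  assumes "a \<in> Vs k" "total_degree P \<le> e"
  shows "P * a \<in> Vs (e + k)"
  using assms tdeg_mult_le[of P a] by (auto simp: Vs_def)

lemma card_arith:
  fixes d e m :: nat
  assumes "2 * cd = (d + m + 1) * (d + m + 2)" "2 * ce = (e + m + 1) * (e + m + 2)"
    "2 * cm = (m + 1) * (m + 2)" "2 * cn = (d + e + m + 1) * (d + e + m + 2)"
    "cd + (ce - cm) + m \<le> cn" "cm \<le> ce"
  shows "m \<le> e * d"
proof -
  have id: "(d + m + 1) * (d + m + 2) + (e + m + 1) * (e + m + 2) + 2 * (e * d) =
      (d + e + m + 1) * (d + e + m + 2) + (m + 1) * (m + 2)"
    by (simp add: algebra_simps)
  have "2 * cd + 2 * ce + 2 * m \<le> 2 * cn + 2 * cm" using assms(5,6) by linarith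
  then show ?thesis using id assms(1-4) by linarith
qed

lemma bezout:
  assumes P: "P \<noteq> 0" and Q: "Q \<noteq> 0"
    and pr: "\<And>B. P dvd Q * B \<Longrightarrow> P dvd B"
    and T: "finite T" "\<And>t. t \<in> T \<Longrightarrow> eval2 P t = 0 \<and> eval2 Q t = 0"
  shows "card T \<le> total_degree P * total_degree Q"
proof -
  define e where "e = total_degree P"
  define d where "d = total_degree Q"
  define m where "m = card T"
  define n where "n = d + e + m"
  define K where "K = Kset n T"
  have dimK: "pv.dim K + m = card (Iset n)"
    unfolding K_def m_def using bezout_dim[OF T(1)] by (simp add: n_def m_def)
  define PM where "PM = (\<lambda>a. P * a) ` Mon m"
  have iPM: "pv.independent PM" unfolding PM_def using mulP_indep[OF P indep_Mon] .
  have PMsub: "PM \<subseteq> Vs (e + m)"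
    unfolding PM_def
  proof (rule image_subsetI)
    fix a assume "a \<in> Mon m"
    then have "a \<in> Vs m" using Mon_sub_Vs by blast
    then show "P * a \<in> Vs (e + m)" by (rule Vs_mult) (simp add: e_def)
  qed
  obtain B2 where B2: "PM \<subseteq> B2" "B2 \<subseteq> Vs (e + m)" "pv.independent B2" "Vs (e + m) \<subseteq> pv.span B2"
    using pv.maximal_independent_subset_extend[OF PMsub iPM] by blast
  have finB2: "finite B2"
    using pv.independent_span_bound[OF finite_Mon B2(3)] B2(2) Vs_sub_span by blast
  have cB2: "card B2 = card (Iset (e + m))"
    using pv.basis_card_eq_dim[OF B2(2) B2(4) B2(3)] dim_Vs by simp
  have cPM: "card PM = card (Iset m)"
    unfolding PM_def using card_Mon P by (subst card_image) (auto simp: inj_on_def)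
  have finPM: "finite PM" using finB2 B2(1) finite_subset by blast
  define R2 where "R2 = B2 - PM"
  have finR2: "finite R2" using finB2 by (simp add: R2_def)
  have cR2: "card R2 = card (Iset (e + m)) - card (Iset m)"
    unfolding R2_def using card_Diff_subset[OF finPM B2(1)] cB2 cPM by simp
  have cle: "card (Iset m) \<le> card (Iset (e + m))"
    using card_mono[OF finB2 B2(1)] cB2 cPM by simp
  have iR2: "pv.independent R2" unfolding R2_def by (rule pv.independent_mono[OF B2(3)]) blast
  have spB2: "pv.span B2 \<subseteq> Vs (e + m)"
    using pv.span_minimal[OF B2(2) subspace_Vs] .
  define X where "X = (\<lambda>a. P * a) ` Mon (d + m)"
  define Y where "Y = (\<lambda>a. Q * a) ` R2"
  have iX: "pv.independent X" unfolding X_def using mulP_indep[OF P indep_Mon] .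
  have iY: "pv.independent Y" unfolding Y_def using mulP_indep[OF Q iR2] .
  have finY: "finite Y" using finR2 by (simp add: Y_def)
  have disj: "pv.span X \<inter> pv.span Y \<subseteq> {0}"
  proof
    fix v assume v: "v \<in> pv.span X \<inter> pv.span Y"
    have "v \<in> (\<lambda>a. P * a) ` pv.span (Mon (d + m))" using v by (simp add: X_def span_mulP)
    then obtain a where a: "v = P * a" by blast
    have "v \<in> (\<lambda>a. Q * a) ` pv.span R2" using v by (simp add: Y_def span_mulP)
    then obtain b where b: "v = Q * b" "b \<in> pv.span R2" by blast
    have "P dvd Q * b" using a b by (metis dvd_triv_left)
    then have "P dvd b" by (rule pr)
    then obtain c where c: "b = P * c" by (rule dvdE)
    have "pv.span R2 \<subseteq> pv.span B2" by (rule pv.span_mono) (simp add: R2_def)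
    then have bV: "b \<in> Vs (e + m)" using b(2) spB2 by blast
    have "b = 0"
    proof (cases "c = 0")
      case True then show ?thesis using c by simp
    next
      case False
      have "total_degree b = e + total_degree c" using c tdeg_mult[OF P False] e_def by simp
      then have "c \<in> Vs m" using bV by (simp add: Vs_def)
      then have "c \<in> pv.span (Mon m)" by (simp add: span_Mon)
      then have "b \<in> (\<lambda>a. P * a) ` pv.span (Mon m)" using c by blast
      then have "b \<in> pv.span PM" by (simp add: PM_def span_mulP)
      moreover have "b \<in> pv.span (B2 - PM)" using b(2) by (simp add: R2_def)
      ultimately show ?thesis using pv.span_disj[OF B2(3) finB2 B2(1)] by blast
    qed
    then show "v \<in> {0}" using b by simp
  qed
  have iXY: "pv.independent (X \<union> Y)" using pv.indep_Un_span[OF finY iX iY disj] .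
  have XYK: "X \<union> Y \<subseteq> K"
  proof
    fix z assume "z \<in> X \<union> Y"
    then show "z \<in> K"
    proof
      assume "z \<in> X"
      then obtain a where a: "a \<in> Mon (d + m)" "z = P * a" by (auto simp: X_def)
      have "a \<in> Vs (d + m)" using a(1) Mon_sub_Vs by blast
      then have "P * a \<in> Vs (e + (d + m))" by (rule Vs_mult) (simp add: e_def)
      then have "z \<in> Vs n" using a(2) by (simp add: n_def add_ac)
      then show "z \<in> K" using a T(2) by (auto simp: K_def Kset_def)
    next
      assume "z \<in> Y"
      then obtain b where b: "b \<in> R2" "z = Q * b" by (auto simp: Y_def)
      have "b \<in> Vs (e + m)" using b(1) B2(2) R2_def by blast
      then have "Q * b \<in> Vs (d + (e + m))" by (rule Vs_mult) (simp add: d_def)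
      then have "z \<in> Vs n" using b(2) by (simp add: n_def add_ac)
      then show "z \<in> K" using b T(2) by (auto simp: K_def Kset_def)
    qed
  qed
  have XY0: "X \<inter> Y = {}"
  proof -
    have "X \<inter> Y \<subseteq> {0}" using disj pv.span_base by blast
    moreover have "0 \<notin> X" using iX pv.dependent_zero by blast
    ultimately show ?thesis by blast
  qed
  have cX: "card X = card (Iset (d + m))"
    unfolding X_def using card_Mon P by (subst card_image) (auto simp: inj_on_def)
  have cY: "card Y = card R2"
    unfolding Y_def using Q by (subst card_image) (auto simp: inj_on_def)
  have finX: "finite X" by (simp add: X_def finite_Mon)
  have "card (X \<union> Y) \<le> pv.dim K"
    using pv.card_indep_le_dim[OF iXY XYK _ finite_Mon] Kset_sub K_def by blast
  then have "card (Iset (d + m)) + (card (Iset (e + m)) - card (Iset m)) + m \<le> card (Iset n)"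
    using card_Un_disjoint[OF finX finY XY0] cX cY cR2 dimK by linarith
  then have "m \<le> e * d"
    using card_arith[where cd="card (Iset (d + m))" and ce="card (Iset (e + m))" and cm="card (Iset m)"
        and cn="card (Iset n)" and d=d and e=e and m=m,
        OF card_Iset[of "d + m"] card_Iset[of "e + m"] card_Iset[of m]] card_Iset[of n] cle
    unfolding n_def by simp
  then show ?thesis by (simp add: m_def e_def d_def mult.commute)
qed



lemma real_contra1:
  fixes A \<alpha> :: real and d :: nat
  assumes "0 < \<alpha>" "\<alpha> < 1" "A \<ge> 1" "d = nat \<lceil>A powr (1 / (1 - \<alpha>))\<rceil> + 1"
  shows "real d > A * real d powr \<alpha>"
proof -
  define x where "x = A powr (1 / (1 - \<alpha>))"
  have x0: "x > 0" using assms(3) by (simp add: x_def)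
  have dx: "real d > x"
  proof -
    have c: "x \<le> real_of_int \<lceil>x\<rceil>" by (rule le_of_int_ceiling)
    have "real (nat \<lceil>x\<rceil>) = real_of_int \<lceil>x\<rceil>" using x0 by simp
    then have "real d = real_of_int \<lceil>x\<rceil> + 1" using assms(4) x_def by simp
    then show ?thesis using c by linarith
  qed
  have d0: "real d > 0" using dx x0 by linarith
  have "x powr (1 - \<alpha>) = A" using assms by (simp add: x_def powr_powr)
  moreover have "x powr (1 - \<alpha>) < real d powr (1 - \<alpha>)"
    using x0 dx assms(2) by (intro powr_less_mono2) auto
  ultimately have lt: "A < real d powr (1 - \<alpha>)" by simp
  have "real d = real d powr \<alpha> * real d powr (1 - \<alpha>)"
    using d0 by (simp add: powr_add[symmetric])
  also have "\<dots> > real d powr \<alpha> * A"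
    using lt d0 by (intro mult_strict_left_mono) auto
  finally show ?thesis by (simp add: mult.commute)
qed

lemma real_contra2:
  fixes A \<alpha> :: real and d :: nat
  assumes "0 < \<alpha>" "\<alpha> < 2" "A \<ge> 1" "d = nat \<lceil>(2 * A) powr (1 / (2 - \<alpha>))\<rceil> + 1"
  shows "real d ^ 2 > 2 * A * real d powr \<alpha>" "d \<ge> 1"
proof -
  define x where "x = (2 * A) powr (1 / (2 - \<alpha>))"
  have x0: "x > 0" using assms(3) by (simp add: x_def)
  have dx: "real d > x"
  proof -
    have c: "x \<le> real_of_int \<lceil>x\<rceil>" by (rule le_of_int_ceiling)
    have "real (nat \<lceil>x\<rceil>) = real_of_int \<lceil>x\<rceil>" using x0 by simp
    then have "real d = real_of_int \<lceil>x\<rceil> + 1" using assms(4) x_def by simp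
    then show ?thesis using c by linarith
  qed
  have d0: "real d > 0" using dx x0 by linarith
  have "x powr (2 - \<alpha>) = 2 * A" using assms by (simp add: x_def powr_powr)
  moreover have "x powr (2 - \<alpha>) < real d powr (2 - \<alpha>)"
    using x0 dx assms(2) by (intro powr_less_mono2) auto
  ultimately have lt: "2 * A < real d powr (2 - \<alpha>)" by simp
  have "real d ^ 2 = real d powr \<alpha> * real d powr (2 - \<alpha>)"
    using d0 by (simp add: powr_add[symmetric] powr_numeral)
  also have "\<dots> > real d powr \<alpha> * (2 * A)"
    using lt d0 by (intro mult_strict_left_mono) auto
  finally show "real d ^ 2 > 2 * A * real d powr \<alpha>" by (simp add: mult.commute)
  show "d \<ge> 1" using assms(4) by simp
qed

lemma e_bound:
  fixes A \<alpha> :: real and e :: nat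
  assumes "1 \<le> \<alpha>" "\<alpha> < 2" "A \<ge> 1" "e \<ge> 2"
    and h: "(real e - 1) * (real e + 2) \<le> 2 * A * (real e - 1) powr \<alpha>"
  shows "real e \<le> (2 * A) powr (1 / (2 - \<alpha>))"
proof -
  have e1: "real e - 1 > 0" using assms(4) by simp
  have e0: "real e > 0" using assms(4) by simp
  have "(real e - 1) powr \<alpha> = (real e - 1) powr (1 + (\<alpha> - 1))" by simp
  also have "\<dots> = (real e - 1) * (real e - 1) powr (\<alpha> - 1)"
    using e1 by (subst powr_add) simp
  also have "\<dots> \<le> (real e - 1) * real e powr (\<alpha> - 1)"
    using e1 assms(1) by (intro mult_left_mono powr_mono2) auto
  finally have "(real e - 1) * (real e + 2) \<le> (real e - 1) * (2 * A * real e powr (\<alpha> - 1))"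
    using h assms(3) by (smt (verit, ccfv_SIG) mult_left_mono mult.assoc mult.commute)
  then have h2: "real e + 2 \<le> 2 * A * real e powr (\<alpha> - 1)"
    using e1 by (simp add: mult_le_cancel_left_pos)
  have "real e powr (2 - \<alpha>) = real e powr (1 + (1 - \<alpha>))" by simp
  also have "\<dots> = real e * real e powr (1 - \<alpha>)"
    using e0 by (subst powr_add) simp
  finally have "real e powr (2 - \<alpha>) = real e * real e powr (1 - \<alpha>)" .
  also have "\<dots> \<le> (real e + 2) * real e powr (1 - \<alpha>)"
    by (intro mult_right_mono) auto
  also have "\<dots> \<le> 2 * A * real e powr (\<alpha> - 1) * real e powr (1 - \<alpha>)"
    using h2 by (intro mult_right_mono) auto
  also have "\<dots> = 2 * A"
    using e0 by (simp add: mult.assoc powr_add[symmetric])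
  finally have le: "real e powr (2 - \<alpha>) \<le> 2 * A" .
  have "real e = (real e powr (2 - \<alpha>)) powr (1 / (2 - \<alpha>))"
    using e0 assms(2) by (simp add: powr_powr)
  also have "\<dots> \<le> (2 * A) powr (1 / (2 - \<alpha>))"
    using le assms(2) by (intro powr_mono2) auto
  finally show ?thesis .
qed



lemma zero_set_mult: "zero_set (P * Q) = zero_set P \<union> zero_set Q"
  by (auto simp: zero_set_def)

lemma curve_le: "total_degree P \<ge> 1 \<Longrightarrow> curve_degree (zero_set P) \<le> total_degree P"
  unfolding curve_degree_def by (rule Least_le) blast

lemma curve_ex:
  assumes "algebraic_curve X"
  shows "\<exists>P. total_degree P = curve_degree X \<and> total_degree P \<ge> 1 \<and> X = zero_set P"
proof -
  obtain P0 where "total_degree P0 \<ge> 1" "X = zero_set P0" using assms by (auto simp: algebraic_curve_def)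
  then show ?thesis unfolding curve_degree_def by (rule_tac LeastI_ex) blast
qed

lemma curve_I: "total_degree P \<ge> 1 \<Longrightarrow> algebraic_curve (zero_set P)"
  by (auto simp: algebraic_curve_def)

lemma nonconst_of_zero:
  assumes "P \<noteq> 0" "eval2 P t = 0"
  shows "total_degree P \<ge> 1"
proof (rule ccontr)
  assume "\<not> ?thesis"
  then have "total_degree P = 0" by simp
  then have P: "P = [:[:coeff (coeff P 0) 0:]:]" by (rule tdeg_0_const)
  then have "eval2 P t = coeff (coeff P 0) 0" by (metis eval2_const)
  then have "coeff (coeff P 0) 0 = 0" using assms(2) by simp
  then show False using P assms(1) by simp
qed

lemma lines_gen:
  fixes \<pi> :: "complex \<times> complex \<Rightarrow> complex" and l :: "complex \<Rightarrow> complex poly poly"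
  assumes inf: "infinite (\<pi> ` S)"
    and l1: "\<And>a. total_degree (l a) = 1" and l2: "\<And>a. l a \<noteq> 0"
    and l3: "\<And>a z. eval2 (l a) z = \<pi> z - a"
  shows "\<exists>P F. total_degree P = d \<and> \<not> S \<subseteq> zero_set P \<and> finite F \<and> card F = d \<and>
      F \<subseteq> \<pi> ` (S \<inter> zero_set P)"
proof -
  obtain F where F: "finite F" "card F = d" "F \<subseteq> \<pi> ` S"
    using infinite_arbitrarily_large[OF inf] by blast
  define P where "P = (\<Prod>a\<in>F. l a)"
  have tP: "total_degree P = d" using tdeg_prod[OF F(1), of l] l1 l2 F(2) by (simp add: P_def)
  have Z: "z \<in> zero_set P \<longleftrightarrow> \<pi> z \<in> F" for z
    using F(1) by (simp add: zero_set_def P_def eval2_prod l3 prod_zero_iff)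
  have "\<not> \<pi> ` S \<subseteq> F" using inf F(1) finite_subset by blast
  then have "\<not> S \<subseteq> zero_set P" using Z by blast
  moreover have "F \<subseteq> \<pi> ` (S \<inter> zero_set P)" using F(3) Z by blast
  ultimately show ?thesis using tP F by blast
qed

theorem proposition5p1:
  fixes S :: "(complex \<times> complex) set" and A \<alpha> :: real
  assumes "infinite S" and "A \<ge> 1" and "0 < \<alpha>" and "\<alpha> < 2"
    and bound: "\<And>X. algebraic_curve X \<Longrightarrow> \<not> S \<subseteq> X \<Longrightarrow>
        finite (S \<inter> X) \<and> real (card (S \<inter> X)) \<le> A * real (curve_degree X) powr \<alpha>"
  shows "\<alpha> \<ge> 1
    \<and> (\<exists>Y. irreducible_curve Y \<and> S \<subseteq> Y \<and> real (curve_degree Y) \<le> (2 * A) powr (1 / (2 - \<alpha>)))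
    \<and> (\<forall>X. algebraic_curve X \<and> \<not> S \<subseteq> X \<longrightarrow>
        finite (S \<inter> X) \<and> real (card (S \<inter> X)) \<le> (2 * A) powr (1 / (2 - \<alpha>)) * real (curve_degree X))"
proof -
  have bnd: "finite (S \<inter> zero_set Q) \<and> real (card (S \<inter> zero_set Q)) \<le> A * real k powr \<alpha>"
    if Q: "1 \<le> total_degree Q" "total_degree Q \<le> k" "\<not> S \<subseteq> zero_set Q" for Q k
  proof -
    have h: "finite (S \<inter> zero_set Q) \<and> real (card (S \<inter> zero_set Q)) \<le> A * real (curve_degree (zero_set Q)) powr \<alpha>"
      using bound[OF curve_I[OF Q(1)] Q(3)] .
    have "real (curve_degree (zero_set Q)) \<le> real k" using curve_le[OF Q(1)] Q(2) by simp
    then have "real (curve_degree (zero_set Q)) powr \<alpha> \<le> real k powr \<alpha>"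
      using assms(3) by (intro powr_mono2) auto
    then have "A * real (curve_degree (zero_set Q)) powr \<alpha> \<le> A * real k powr \<alpha>"
      using assms(2) by (intro mult_left_mono) auto
    then show ?thesis using h by linarith
  qed
  have alpha1: "\<alpha> \<ge> 1"
  proof (rule ccontr)
    assume "\<not> 1 \<le> \<alpha>"
    then have a1: "\<alpha> < 1" by simp
    define d where "d = nat \<lceil>A powr (1 / (1 - \<alpha>))\<rceil> + 1"
    have big: "real d > A * real d powr \<alpha>" using real_contra1[OF assms(3) a1 assms(2) d_def] .
    have d1: "d \<ge> 1" by (simp add: d_def)
    have "\<exists>P (F::complex set) \<pi>. total_degree P = d \<and> \<not> S \<subseteq> zero_set P \<and> finite F \<and> card F = d \<and>
      F \<subseteq> \<pi> ` (S \<inter> zero_set P)"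
    proof (cases "infinite (fst ` S)")
      case True
      obtain P F where h: "total_degree P = d \<and> \<not> S \<subseteq> zero_set P \<and> finite F \<and> card F = d \<and> F \<subseteq> fst ` (S \<inter> zero_set P)"
        using lines_gen[OF True tdeg_Xl Xl_nz eval2_Xl, of d] by blast
      show ?thesis by (rule exI[where x=P], rule exI[where x=F], rule exI[where x=fst], rule h)
    next
      case False
      have inf2: "infinite (snd ` S)"
      proof
        assume "finite (snd ` S)"
        then have "finite (fst ` S \<times> snd ` S)" using False by simp
        moreover have "S \<subseteq> fst ` S \<times> snd ` S" by force
        ultimately show False using assms(1) finite_subset by blast
      qed
      obtain P F where h: "total_degree P = d \<and> \<not> S \<subseteq> zero_set P \<and> finite F \<and> card F = d \<and> F \<subseteq> snd ` (S \<inter> zero_set P)"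
        using lines_gen[OF inf2 tdeg_Yl Yl_nz eval2_Yl, of d] by blast
      show ?thesis by (rule exI[where x=P], rule exI[where x=F], rule exI[where x=snd], rule h)
    qed
    then obtain P and F :: "complex set" and \<pi> :: "complex \<times> complex \<Rightarrow> complex" where P: "total_degree P = d" "\<not> S \<subseteq> zero_set P"
      and F: "finite F" "card F = d" "F \<subseteq> \<pi> ` (S \<inter> zero_set P)" by blast
    have b: "finite (S \<inter> zero_set P)" "real (card (S \<inter> zero_set P)) \<le> A * real d powr \<alpha>"
      using bnd[of P d] P d1 by auto
    have "card F \<le> card (\<pi> ` (S \<inter> zero_set P))" using F(3) b(1) by (intro card_mono) auto
    also have "\<dots> \<le> card (S \<inter> zero_set P)" using b(1) by (rule card_image_le)
    finally have "real d \<le> real (card (S \<inter> zero_set P))" using F(2) by simp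
    then show False using b(2) big by linarith
  qed
  have key: "(\<exists>Q. 1 \<le> total_degree Q \<and> total_degree Q \<le> k \<and> S \<subseteq> zero_set Q)
      \<or> real (card (Iset k)) - 1 \<le> A * real k powr \<alpha>" if k1: "k \<ge> 1" for k
  proof -
    have "2 * card (Iset k) = (k + 1) * (k + 2)" by (rule card_Iset)
    moreover have "(k + 1) * (k + 2) \<ge> 2 * 3" using k1 by (intro mult_le_mono) auto
    ultimately have c3: "card (Iset k) \<ge> 3" by linarith
    obtain T where T: "finite T" "card T = card (Iset k) - 1" "T \<subseteq> S"
      using infinite_arbitrarily_large[OF assms(1)] by blast
    have "T \<noteq> {}" using T(2) c3 by auto
    then obtain t where t: "t \<in> T" by blast
    obtain Q where Q: "Q \<noteq> 0" "total_degree Q \<le> k" "\<forall>t\<in>T. eval2 Q t = 0"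
      using interp[OF T(1), of k] T(2) c3 by auto
    have Q1: "total_degree Q \<ge> 1" using nonconst_of_zero[OF Q(1)] Q(3) t by blast
    show ?thesis
    proof (cases "S \<subseteq> zero_set Q")
      case True then show ?thesis using Q Q1 by blast
    next
      case False
      have b: "finite (S \<inter> zero_set Q)" "real (card (S \<inter> zero_set Q)) \<le> A * real k powr \<alpha>"
        using bnd[OF Q1 Q(2) False] by auto
      have "T \<subseteq> S \<inter> zero_set Q" using T(3) Q(3) by (auto simp: zero_set_def)
      then have "card T \<le> card (S \<inter> zero_set Q)" using b(1) by (rule card_mono[rotated])
      then have "real (card (Iset k)) - 1 \<le> real (card (S \<inter> zero_set Q))" using T(2) c3 by simp
      then show ?thesis using b(2) by simp
    qed
  qed
  define \<Phi> where "\<Phi> k \<longleftrightarrow> (\<exists>P. total_degree P = k \<and> k \<ge> 1 \<and> S \<subseteq> zero_set P)" for k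
  have ex: "\<exists>k. \<Phi> k"
  proof -
    define d where "d = nat \<lceil>(2 * A) powr (1 / (2 - \<alpha>))\<rceil> + 1"
    note rc = real_contra2[OF assms(3) assms(4) assms(2) d_def]
    have "\<not> real (card (Iset d)) - 1 \<le> A * real d powr \<alpha>"
    proof -
      have "real (2 * card (Iset d)) = real ((d + 1) * (d + 2))" by (simp only: card_Iset)
      then have "2 * real (card (Iset d)) = real d ^ 2 + 3 * real d + 2"
        by (simp add: power2_eq_square algebra_simps)
      then show ?thesis using rc(1) by simp
    qed
    then obtain Q where "1 \<le> total_degree Q" "S \<subseteq> zero_set Q" using key[OF rc(2)] by blast
    then have "\<Phi> (total_degree Q)" by (auto simp: \<Phi>_def)
    then show ?thesis by blast
  qed
  define e where "e = (LEAST k. \<Phi> k)"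
  have \<Phi>e: "\<Phi> e" unfolding e_def using ex by (rule_tac LeastI_ex) blast
  have emin: "\<And>k. \<Phi> k \<Longrightarrow> e \<le> k" unfolding e_def by (rule Least_le)
  obtain P where P: "total_degree P = e" "e \<ge> 1" "S \<subseteq> zero_set P" using \<Phi>e by (auto simp: \<Phi>_def)
  have P0: "P \<noteq> 0" using P(1,2) by (auto)
  have eB: "real e \<le> (2 * A) powr (1 / (2 - \<alpha>))"
  proof (cases "e = 1")
    case True
    have "1 \<le> (2 * A) powr (1 / (2 - \<alpha>))" using assms(2,4) by (intro ge_one_powr_ge_zero) auto
    then show ?thesis using True by simp
  next
    case False
    then have e2: "e \<ge> 2" using P(2) by simp
    have nq: "\<not> (\<exists>Q. 1 \<le> total_degree Q \<and> total_degree Q \<le> e - 1 \<and> S \<subseteq> zero_set Q)"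
    proof
      assume "\<exists>Q. 1 \<le> total_degree Q \<and> total_degree Q \<le> e - 1 \<and> S \<subseteq> zero_set Q"
      then obtain Q where "1 \<le> total_degree Q" "total_degree Q \<le> e - 1" "S \<subseteq> zero_set Q" by blast
      then have "\<Phi> (total_degree Q)" by (auto simp: \<Phi>_def)
      then have "e \<le> total_degree Q" by (rule emin)
      then show False using \<open>total_degree Q \<le> e - 1\<close> e2 by simp
    qed
    have k1: "e - 1 \<ge> 1" using e2 by simp
    have h: "real (card (Iset (e - 1))) - 1 \<le> A * real (e - 1) powr \<alpha>"
      using key[OF k1] nq by blast
    have "real (2 * card (Iset (e - 1))) = real ((e - 1 + 1) * (e - 1 + 2))" by (simp only: card_Iset)
    moreover have "e - 1 + 1 = e" "e - 1 + 2 = e + 1" using e2 by auto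
    ultimately have "2 * real (card (Iset (e - 1))) = real e * (real e + 1)" by (simp add: algebra_simps)
    moreover have "real (e - 1) = real e - 1" using e2 by simp
    ultimately have "(real e - 1) * (real e + 2) \<le> 2 * A * (real e - 1) powr \<alpha>"
      using h by (simp add: algebra_simps)
    then show ?thesis using e_bound[OF alpha1 assms(4) assms(2) e2] by blast
  qed
  have irr: "irreducible P"
  proof (rule ccontr)
    assume nirr: "\<not> irreducible P"
    have "\<not> is_unit P" using unit_tdeg P(1,2) by force
    then obtain a b where ab: "P = a * b" "\<not> is_unit a" "\<not> is_unit b"
      using nirr P0 by (auto simp: irreducible_def)
    have a0: "a \<noteq> 0" "b \<noteq> 0" using ab P0 by auto
    have ta: "total_degree a \<ge> 1" using tdeg0_unit[of a] ab(2) a0 by (cases "total_degree a = 0") auto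
    have tb: "total_degree b \<ge> 1" using tdeg0_unit[of b] ab(3) a0 by (cases "total_degree b = 0") auto
    have sum: "total_degree a + total_degree b = e" using tdeg_mult[OF a0] ab(1) P(1) by simp
    have na: "\<not> S \<subseteq> zero_set a"
    proof
      assume "S \<subseteq> zero_set a"
      then have "\<Phi> (total_degree a)" using ta by (auto simp: \<Phi>_def)
      then show False using emin sum tb by fastforce
    qed
    have nb: "\<not> S \<subseteq> zero_set b"
    proof
      assume "S \<subseteq> zero_set b"
      then have "\<Phi> (total_degree b)" using tb by (auto simp: \<Phi>_def)
      then show False using emin sum ta by fastforce
    qed
    have "finite (S \<inter> zero_set a)" using bound[OF curve_I[OF ta] na] by blast
    moreover have "finite (S \<inter> zero_set b)" using bound[OF curve_I[OF tb] nb] by blast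
    moreover have "S = (S \<inter> zero_set a) \<union> (S \<inter> zero_set b)" using P(3) ab(1) zero_set_mult by blast
    ultimately show False using assms(1) by (metis finite_Un)
  qed
  have part2: "\<exists>Y. irreducible_curve Y \<and> S \<subseteq> Y \<and> real (curve_degree Y) \<le> (2 * A) powr (1 / (2 - \<alpha>))"
  proof (intro exI conjI)
    show "irreducible_curve (zero_set P)" using irr P by (auto simp: irreducible_curve_def)
    show "S \<subseteq> zero_set P" by (rule P(3))
    have "curve_degree (zero_set P) \<le> e" using curve_le[of P] P by simp
    then show "real (curve_degree (zero_set P)) \<le> (2 * A) powr (1 / (2 - \<alpha>))" using eB by linarith
  qed
  have part3: "finite (S \<inter> X) \<and> real (card (S \<inter> X)) \<le> (2 * A) powr (1 / (2 - \<alpha>)) * real (curve_degree X)"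
    if X: "algebraic_curve X" "\<not> S \<subseteq> X" for X
  proof -
    have fin: "finite (S \<inter> X)" using bound[OF X] by blast
    obtain Q where Q: "total_degree Q = curve_degree X" "total_degree Q \<ge> 1" "X = zero_set Q"
      using curve_ex[OF X(1)] by blast
    have Q0: "Q \<noteq> 0" using Q(2) by auto
    have pe: "prime_elem P" using irr by (rule irreducible_imp_prime_elem)
    have nPQ: "\<not> P dvd Q"
    proof
      assume "P dvd Q"
      then obtain R where "Q = P * R" by (rule dvdE)
      then have "zero_set P \<subseteq> X" using Q(3) zero_set_mult by blast
      then show False using X(2) P(3) by blast
    qed
    have pr: "P dvd B" if "P dvd Q * B" for B
      using prime_elem_dvd_multD[OF pe that] nPQ by blast
    have "card (S \<inter> X) \<le> total_degree P * total_degree Q"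
      using bezout[OF P0 Q0 pr fin] P(3) Q(3) by (auto simp: zero_set_def)
    then have "real (card (S \<inter> X)) \<le> real e * real (curve_degree X)"
      using P(1) Q(1) by (metis of_nat_le_iff of_nat_mult)
    also have "\<dots> \<le> (2 * A) powr (1 / (2 - \<alpha>)) * real (curve_degree X)"
      using eB by (intro mult_right_mono) auto
    finally show ?thesis using fin by simp
  qed
  show ?thesis using alpha1 part2 part3 by blast
qed


end
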